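(* Let $k\geq 3$ and $\mathbf{x}=(x_1,\ldots,x_n)\in\Delta^{n-1}$, and let $q=q(\mathbf{x})$. If $|\mathbf{x}|_{\max}<1/(k-1)$, then \[ S_k(\mathbf{x})>q^k\binom{1/q}{k}, \] unless the nonzero entries of $\mathbf{x}$ are equal.
   Context: $\Delta^{n-1}=\{\mathbf{x}\in\mathbb{R}^n: x_i\geq0 \text{ for all } i,\ \sum_i x_i=1\}$. $S_k(\mathbf{x})$ denotes the $k$-th elementary symmetric polynomial of $x_1,\ldots,x_n$. $q(\mathbf{x})=x_1^2+\cdots+x_n^2$. $|\mathbf{x}|_{\max}=\max_i x_i$. For real $s$, $\binom{s}{k}=s(s-1)\cdots(s-k+1)/k!$. *)

theory Defs
  imports "HOL-Analysis.Analysis"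
begin

definition in_simplex :: "nat \<Rightarrow> (nat \<Rightarrow> real) \<Rightarrow> bool" where
  "in_simplex n x \<longleftrightarrow> (\<forall>i<n. x i \<ge> 0) \<and> (\<Sum>i<n. x i) = 1"

definition elem_sym :: "nat \<Rightarrow> nat \<Rightarrow> (nat \<Rightarrow> real) \<Rightarrow> real" where
  "elem_sym n k x = (\<Sum>I\<in>{I. I \<subseteq> {..<n} \<and> card I = k}. \<Prod>i\<in>I. x i)"

definition sq_sum :: "nat \<Rightarrow> (nat \<Rightarrow> real) \<Rightarrow> real" where
  "sq_sum n x = (\<Sum>i<n. (x i)^2)"

definition max_entry :: "nat \<Rightarrow> (nat \<Rightarrow> real) \<Rightarrow> real" where
  "max_entry n x = Max (x ` {..<n})"

end

theory Submission
  imports Defs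
begin

definition es :: "(nat \<Rightarrow> real) \<Rightarrow> nat set \<Rightarrow> nat \<Rightarrow> real" where
  "es x A j = (\<Sum>I\<in>{I. I \<subseteq> A \<and> card I = j}. \<Prod>i\<in>I. x i)"

lemma es_0: "finite A \<Longrightarrow> es x A 0 = 1"
proof -
  assume f: "finite A"
  have "{I. I \<subseteq> A \<and> card I = 0} = {{}}"
    using f by (auto dest: finite_subset)
  then show ?thesis by (simp add: es_def)
qed

lemma es_empty: "es x {} (Suc j) = 0"
  by (simp add: es_def)

lemma es_insert:
  assumes f: "finite A" and a: "a \<notin> A"
  shows "es x (insert a A) (Suc j) = es x A (Suc j) + x a * es x A j"
proof -
  have eq: "{I. I \<subseteq> insert a A \<and> card I = Suc j} =
     {I. I \<subseteq> A \<and> card I = Suc j} \<union> insert a ` {I. I \<subseteq> A \<and> card I = j}"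
  proof (rule set_eqI, rule iffI)
    fix I assume "I \<in> {I. I \<subseteq> insert a A \<and> card I = Suc j}"
    then have I: "I \<subseteq> insert a A" "card I = Suc j" by auto
    have fI: "finite I" using I(1) f finite_subset by blast
    show "I \<in> {I. I \<subseteq> A \<and> card I = Suc j} \<union> insert a ` {I. I \<subseteq> A \<and> card I = j}"
    proof (cases "a \<in> I")
      case True
      then have "I = insert a (I - {a})" by auto
      moreover have "I - {a} \<subseteq> A" using I(1) by auto
      moreover have "card (I - {a}) = j" using I(2) True fI by simp
      ultimately show ?thesis by blast
    next
      case False
      then show ?thesis using I by auto
    qed
  next
    fix I assume "I \<in> {I. I \<subseteq> A \<and> card I = Suc j} \<union> insert a ` {I. I \<subseteq> A \<and> card I = j}"
    then show "I \<in> {I. I \<subseteq> insert a A \<and> card I = Suc j}"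
    proof
      assume "I \<in> {I. I \<subseteq> A \<and> card I = Suc j}" then show ?thesis by auto
    next
      assume "I \<in> insert a ` {I. I \<subseteq> A \<and> card I = j}"
      then obtain J where J: "J \<subseteq> A" "card J = j" "I = insert a J" by auto
      have "finite J" using J(1) f finite_subset by blast
      moreover have "a \<notin> J" using J(1) a by auto
      ultimately show ?thesis using J by auto
    qed
  qed
  have disj: "{I. I \<subseteq> A \<and> card I = Suc j} \<inter> insert a ` {I. I \<subseteq> A \<and> card I = j} = {}"
    using a by auto
  have inj: "inj_on (insert a) {I. I \<subseteq> A \<and> card I = j}"
  proof (rule inj_onI)
    fix I J assume "I \<in> {I. I \<subseteq> A \<and> card I = j}" "J \<in> {I. I \<subseteq> A \<and> card I = j}"
      "insert a I = insert a J"
    then show "I = J" using a by (metis insert_Diff_single insert_absorb insert_ident mem_Collect_eq subsetD)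
  qed
  have fin1: "finite {I. I \<subseteq> A \<and> card I = Suc j}" using f by simp
  have fin2: "finite (insert a ` {I. I \<subseteq> A \<and> card I = j})" using f by simp
  have "es x (insert a A) (Suc j) = es x A (Suc j) +
      (\<Sum>I\<in>insert a ` {I. I \<subseteq> A \<and> card I = j}. \<Prod>i\<in>I. x i)"
    unfolding es_def eq by (rule sum.union_disjoint[OF fin1 fin2 disj])
  also have "(\<Sum>I\<in>insert a ` {I. I \<subseteq> A \<and> card I = j}. \<Prod>i\<in>I. x i)
     = (\<Sum>I\<in>{I. I \<subseteq> A \<and> card I = j}. \<Prod>i\<in>insert a I. x i)"
    by (simp add: sum.reindex[OF inj])
  also have "\<dots> = (\<Sum>I\<in>{I. I \<subseteq> A \<and> card I = j}. x a * (\<Prod>i\<in>I. x i))"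
  proof (rule sum.cong[OF refl])
    fix I assume "I \<in> {I. I \<subseteq> A \<and> card I = j}"
    then have "finite I" "a \<notin> I" using f a finite_subset by auto
    then show "(\<Prod>i\<in>insert a I. x i) = x a * (\<Prod>i\<in>I. x i)" by simp
  qed
  also have "\<dots> = x a * es x A j" by (simp add: es_def sum_distrib_left)
  finally show ?thesis .
qed

lemma es_remove:
  assumes "finite A" "i \<in> A"
  shows "es x A (Suc j) = es x (A - {i}) (Suc j) + x i * es x (A - {i}) j"
proof -
  have "A = insert i (A - {i})" using assms by auto
  then have "es x A (Suc j) = es x (insert i (A - {i})) (Suc j)" by simp
  also have "\<dots> = es x (A - {i}) (Suc j) + x i * es x (A - {i}) j"
    using assms by (intro es_insert) auto
  finally show ?thesis .
qed

lemma es_nonneg: "(\<forall>i\<in>A. x i \<ge> 0) \<Longrightarrow> es x A j \<ge> 0"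
  unfolding es_def by (intro sum_nonneg prod_nonneg) auto

lemma es_1: "finite A \<Longrightarrow> es x A (Suc 0) = sum x A"
proof (induction A rule: finite_induct)
  case empty then show ?case by (simp add: es_empty)
next
  case (insert a A) then show ?case by (simp add: es_insert es_0)
qed

lemma es_sum: "finite A \<Longrightarrow> (\<Sum>i\<in>A. x i * es x (A - {i}) j) = real (Suc j) * es x A (Suc j)"
proof (induction A arbitrary: j rule: finite_induct)
  case empty then show ?case by (simp add: es_empty)
next
  case (insert a A)
  show ?case
  proof (cases j)
    case 0
    have "(\<Sum>i\<in>insert a A. x i * es x (insert a A - {i}) j) = (\<Sum>i\<in>insert a A. x i)"
      using insert(1) 0 by (intro sum.cong) (auto simp: es_0)
    then show ?thesis using 0 insert(1) by (simp add: es_1)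
  next
    case (Suc p)
    have e: "es x (insert a A - {i}) j = es x (A - {i}) (Suc p) + x a * es x (A - {i}) p"
      if "i \<in> A" for i
    proof -
      have "insert a A - {i} = insert a (A - {i})" using that insert(2) by auto
      then show ?thesis using insert(1,2) Suc by (simp add: es_insert)
    qed
    have "(\<Sum>i\<in>insert a A. x i * es x (insert a A - {i}) j)
       = x a * es x A j + (\<Sum>i\<in>A. x i * es x (insert a A - {i}) j)"
      using insert(1,2) by simp
    also have "(\<Sum>i\<in>A. x i * es x (insert a A - {i}) j)
       = (\<Sum>i\<in>A. x i * es x (A - {i}) (Suc p)) + x a * (\<Sum>i\<in>A. x i * es x (A - {i}) p)"
      by (simp add: e sum.distrib sum_distrib_left algebra_simps)
    also have "\<dots> = real (Suc (Suc p)) * es x A (Suc (Suc p)) + x a * (real (Suc p) * es x A (Suc p))"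
      using insert(3) by simp
    finally show ?thesis using Suc insert(1,2) by (simp add: es_insert algebra_simps)
  qed
qed


lemma double_sum_id:
  fixes x E :: "nat \<Rightarrow> real"
  assumes "finite A"
  shows "(\<Sum>i\<in>A. \<Sum>l\<in>A. x i * x l * (x i - x l) * (E i - E l))
    = 2 * (\<Sum>i\<in>A. (x i)^2 * E i) * sum x A - 2 * (\<Sum>i\<in>A. (x i)^2) * (\<Sum>i\<in>A. x i * E i)"
proof -
  have t: "x i * x l * (x i - x l) * (E i - E l) =
     ((x i)^2 * E i) * x l - (x i)^2 * (x l * E l) - x i * ((x l)^2 * E i) + x i * ((x l)^2 * E l)"
     for i l by (simp add: power2_eq_square algebra_simps)
  have s3: "(\<Sum>i\<in>A. \<Sum>l\<in>A. x i * ((x l)^2 * E i)) = (\<Sum>i\<in>A. \<Sum>l\<in>A. (x i * E i) * (x l)^2)"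
    by (simp add: algebra_simps)
  have "(\<Sum>i\<in>A. \<Sum>l\<in>A. x i * x l * (x i - x l) * (E i - E l))
    = (\<Sum>i\<in>A. \<Sum>l\<in>A. ((x i)^2 * E i) * x l) - (\<Sum>i\<in>A. \<Sum>l\<in>A. (x i)^2 * (x l * E l))
      - (\<Sum>i\<in>A. \<Sum>l\<in>A. x i * ((x l)^2 * E i)) + (\<Sum>i\<in>A. \<Sum>l\<in>A. x i * ((x l)^2 * E l))"
    by (simp only: t sum.distrib sum_subtractf)
  also have "\<dots> = (\<Sum>i\<in>A. (x i)^2 * E i) * sum x A - (\<Sum>i\<in>A. (x i)^2) * (\<Sum>i\<in>A. x i * E i)
      - (\<Sum>i\<in>A. x i * E i) * (\<Sum>i\<in>A. (x i)^2) + sum x A * (\<Sum>i\<in>A. (x i)^2 * E i)"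
    by (simp only: s3 sum_product)
  finally show ?thesis by simp
qed

lemma step_identity:
  fixes j :: nat and x :: "nat \<Rightarrow> real"
  assumes f: "finite A" and s1: "sum x A = 1"
  defines "q \<equiv> (\<Sum>i\<in>A. (x i)^2)"
  defines "D \<equiv> (\<Sum>i\<in>A. \<Sum>l\<in>A. x i * x l * (x i - x l) *
                   (es x (A - {i}) j - es x (A - {l}) j))"
  shows "real (Suc (Suc j)) * es x A (Suc (Suc j)) = (1 - real (Suc j) * q) * es x A (Suc j) - D / 2"
proof -
  let ?E = "\<lambda>i. es x (A - {i}) j"
  have h1: "real (Suc (Suc j)) * es x A (Suc (Suc j)) = (\<Sum>i\<in>A. x i * es x (A - {i}) (Suc j))"
    using es_sum[OF f, of x "Suc j"] by simp
  have h2: "es x (A - {i}) (Suc j) = es x A (Suc j) - x i * ?E i" if "i \<in> A" for i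
    using es_remove[OF f that, of x j] by simp
  have h3: "(\<Sum>i\<in>A. x i * es x (A - {i}) (Suc j)) = es x A (Suc j) - (\<Sum>i\<in>A. (x i)^2 * ?E i)"
  proof -
    have "(\<Sum>i\<in>A. x i * es x (A - {i}) (Suc j)) = (\<Sum>i\<in>A. x i * es x A (Suc j) - (x i)^2 * ?E i)"
      by (intro sum.cong refl) (simp add: h2 power2_eq_square algebra_simps)
    also have "\<dots> = es x A (Suc j) - (\<Sum>i\<in>A. (x i)^2 * ?E i)"
      by (simp add: sum_subtractf flip: sum_distrib_right) (simp add: s1)
    finally show ?thesis .
  qed
  have h4: "real (Suc j) * es x A (Suc j) = (\<Sum>i\<in>A. x i * ?E i)"
    using es_sum[OF f, of x j] by simp
  have h5: "D = 2 * (\<Sum>i\<in>A. (x i)^2 * ?E i) - 2 * q * (\<Sum>i\<in>A. x i * ?E i)"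
    unfolding D_def q_def using double_sum_id[OF f, of x ?E] s1 by simp
  have "(1 - real (Suc j) * q) * es x A (Suc j) - D / 2
      = es x A (Suc j) - q * (real (Suc j) * es x A (Suc j)) - D / 2"
    by (simp add: algebra_simps)
  also have "\<dots> = es x A (Suc j) - q * (\<Sum>i\<in>A. x i * ?E i) - D / 2" by (simp only: h4)
  also have "\<dots> = es x A (Suc j) - (\<Sum>i\<in>A. (x i)^2 * ?E i)" unfolding h5 by (simp add: field_simps)
  finally show ?thesis using h1 h3 by simp
qed

lemma D_nonpos:
  assumes f: "finite A" and nn: "\<forall>i\<in>A. x i \<ge> 0"
  shows "(\<Sum>i\<in>A. \<Sum>l\<in>A. x i * x l * (x i - x l) *
                   (es x (A - {i}) j - es x (A - {l}) j)) \<le> 0"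
proof (cases j)
  case 0
  then show ?thesis using f by (simp add: es_0)
next
  case (Suc p)
  have "x i * x l * (x i - x l) * (es x (A - {i}) j - es x (A - {l}) j) \<le> 0"
    if "i \<in> A" "l \<in> A" for i l
  proof (cases "i = l")
    case True then show ?thesis by simp
  next
    case False
    have a: "es x (A - {i}) (Suc p) = es x (A - {i} - {l}) (Suc p) + x l * es x (A - {i} - {l}) p"
      using es_remove[of "A - {i}" l x p] f that False by auto
    have b: "es x (A - {l}) (Suc p) = es x (A - {l} - {i}) (Suc p) + x i * es x (A - {l} - {i}) p"
      using es_remove[of "A - {l}" i x p] f that False by auto
    have c: "A - {l} - {i} = A - {i} - {l}" by auto
    have "x i * x l * (x i - x l) * (es x (A - {i}) j - es x (A - {l}) j)
        = - (x i * x l * (x i - x l)^2 * es x (A - {i} - {l}) p)"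
      using a b c Suc by (simp add: power2_eq_square algebra_simps)
    also have "\<dots> \<le> 0"
      using nn that by (intro neg_le_0_iff_le[THEN iffD2] mult_nonneg_nonneg es_nonneg) auto
    finally show ?thesis .
  qed
  then show ?thesis by (intro sum_nonpos) auto
qed

lemma D_neg:
  assumes f: "finite A" and nn: "\<forall>i\<in>A. x i \<ge> 0"
    and a: "a \<in> A" "b \<in> A" "x a \<noteq> 0" "x b \<noteq> 0" "x a \<noteq> x b"
  shows "(\<Sum>i\<in>A. \<Sum>l\<in>A. x i * x l * (x i - x l) *
                   (es x (A - {i}) (Suc 0) - es x (A - {l}) (Suc 0))) < 0"
proof -
  have t: "x i * x l * (x i - x l) * (es x (A - {i}) (Suc 0) - es x (A - {l}) (Suc 0))
        = - (x i * x l * (x i - x l)^2)" if "i \<in> A" "l \<in> A" for i l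
  proof (cases "i = l")
    case True then show ?thesis by simp
  next
    case False
    have a: "es x (A - {i}) (Suc 0) = es x (A - {i} - {l}) (Suc 0) + x l"
      using es_remove[of "A - {i}" l x 0] f that False by (auto simp: es_0)
    have b: "es x (A - {l}) (Suc 0) = es x (A - {l} - {i}) (Suc 0) + x i"
      using es_remove[of "A - {l}" i x 0] f that False by (auto simp: es_0)
    have c: "A - {l} - {i} = A - {i} - {l}" by auto
    show ?thesis using a b c by (simp add: power2_eq_square algebra_simps)
  qed
  have le: "- (x i * x l * (x i - x l)^2) \<le> 0" if "i \<in> A" "l \<in> A" for i l
    using nn that by simp
  have pa: "x a > 0" "x b > 0" using nn a by (auto simp: order_le_less)
  have lt: "- (x a * x b * (x a - x b)^2) < 0"
    using pa a(5) by simp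
  have "(\<Sum>i\<in>A. \<Sum>l\<in>A. x i * x l * (x i - x l) *
                   (es x (A - {i}) (Suc 0) - es x (A - {l}) (Suc 0)))
       = (\<Sum>i\<in>A. \<Sum>l\<in>A. - (x i * x l * (x i - x l)^2))"
    using t by (intro sum.cong refl) auto
  also have "\<dots> < (\<Sum>i\<in>A. (0::real))"
  proof (rule sum_strict_mono_ex1[OF f])
    show "\<forall>i\<in>A. (\<Sum>l\<in>A. - (x i * x l * (x i - x l)^2)) \<le> 0"
      using le by (auto intro: sum_nonpos)
    have "(\<Sum>l\<in>A. - (x a * x l * (x a - x l)^2)) < (\<Sum>l\<in>A. (0::real))"
      by (rule sum_strict_mono_ex1[OF f]) (use le a lt in auto)
    then show "\<exists>i\<in>A. (\<Sum>l\<in>A. - (x i * x l * (x i - x l)^2)) < 0"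
      using a by auto
  qed
  finally show ?thesis by simp
qed


lemma main_ineq:
  assumes f: "finite A" and nn: "\<forall>i\<in>A. x i \<ge> 0" and s1: "sum x A = 1"
    and qd: "q = (\<Sum>i\<in>A. (x i)^2)"
    and mq: "\<forall>m<k. real m * q < 1"
    and ab: "a \<in> A" "b \<in> A" "x a \<noteq> 0" "x b \<noteq> 0" "x a \<noteq> x b"
  shows "m \<le> k \<Longrightarrow> (\<Prod>t=0..<m. 1 - real t * q) \<le> fact m * es x A m \<and>
           (3 \<le> m \<longrightarrow> (\<Prod>t=0..<m. 1 - real t * q) < fact m * es x A m)"
proof (induction m)
  case 0 then show ?case using f by (simp add: es_0)
next
  case (Suc m)
  let ?P = "\<lambda>m. (\<Prod>t=0..<m. 1 - real t * q)"
  have mk: "m < k" using Suc.prems by simp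
  have c: "1 - real m * q > 0" using mq mk by simp
  have IH: "?P m \<le> fact m * es x A m" "3 \<le> m \<Longrightarrow> ?P m < fact m * es x A m"
    using Suc.IH Suc.prems by auto
  have PS: "?P (Suc m) = ?P m * (1 - real m * q)" by simp
  show ?case
  proof (cases m)
    case 0 then show ?thesis using f s1 by (simp add: es_1)
  next
    case (Suc j)
    let ?D = "(\<Sum>i\<in>A. \<Sum>l\<in>A. x i * x l * (x i - x l) *
                   (es x (A - {i}) j - es x (A - {l}) j))"
    have st: "real (Suc m) * es x A (Suc m) = (1 - real m * q) * es x A m - ?D / 2"
      using step_identity[OF f s1, of j] Suc qd by simp
    have Dle: "?D \<le> 0" using D_nonpos[OF f nn] .
    have fS: "fact (Suc m) * es x A (Suc m) = fact m * (real (Suc m) * es x A (Suc m))"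
      by (simp add: fact_Suc algebra_simps)
    have fp: "(fact m :: real) > 0" by simp
    have st1: "real (Suc m) * es x A (Suc m) \<ge> (1 - real m * q) * es x A m"
      using st Dle by simp
    have a1: "fact m * (real (Suc m) * es x A (Suc m)) \<ge> (1 - real m * q) * (fact m * es x A m)"
      using mult_left_mono[OF st1, of "fact m"] fp by (simp add: algebra_simps)
    have a2: "(1 - real m * q) * (fact m * es x A m) \<ge> ?P m * (1 - real m * q)"
      using mult_left_mono[OF IH(1), of "1 - real m * q"] c by (simp add: algebra_simps)
    have le: "?P (Suc m) \<le> fact (Suc m) * es x A (Suc m)"
      using a1 a2 PS fS by linarith
    have lt: "?P (Suc m) < fact (Suc m) * es x A (Suc m)" if "3 \<le> Suc m"
    proof (cases "j = Suc 0")
      case True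
      have Dlt: "?D < 0" using D_neg[OF f nn ab] True by simp
      have st2: "real (Suc m) * es x A (Suc m) > (1 - real m * q) * es x A m"
        using st Dlt by simp
      have "fact m * (real (Suc m) * es x A (Suc m)) > (1 - real m * q) * (fact m * es x A m)"
        using mult_strict_left_mono[OF st2 fp] by (simp add: algebra_simps)
      then show ?thesis using a2 PS fS by linarith
    next
      case False
      then have "3 \<le> m" using that Suc by auto
      then have "(1 - real m * q) * (fact m * es x A m) > ?P m * (1 - real m * q)"
        using mult_strict_left_mono[OF IH(2) c] by (simp add: algebra_simps)
      then show ?thesis using a1 PS fS by linarith
    qed
    show ?thesis using le lt by blast
  qed
qed

theorem theorem3:
  fixes n k :: nat and x :: "nat \<Rightarrow> real"
  assumes "k \<ge> 3"
    and "in_simplex n x"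
    and "max_entry n x < 1 / (real k - 1)"
    and "\<not> (\<forall>i<n. \<forall>j<n. x i \<noteq> 0 \<longrightarrow> x j \<noteq> 0 \<longrightarrow> x i = x j)"
  shows "elem_sym n k x > (sq_sum n x) ^ k * ((1 / sq_sum n x) gchoose k)"
proof -
  let ?A = "{..<n}"
  define q where "q = sq_sum n x"
  have nn: "\<forall>i\<in>?A. x i \<ge> 0" and s1: "sum x ?A = 1"
    using assms(2) by (auto simp: in_simplex_def)
  have qd: "q = (\<Sum>i\<in>?A. (x i)^2)" by (simp add: q_def sq_sum_def)
  obtain a b where ab: "a \<in> ?A" "b \<in> ?A" "x a \<noteq> 0" "x b \<noteq> 0" "x a \<noteq> x b"
    using assms(4) by auto
  have le_max: "x i \<le> max_entry n x" if "i < n" for i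
    unfolding max_entry_def using that by (intro Max_ge) auto
  have qM: "q \<le> max_entry n x"
  proof -
    have "q \<le> (\<Sum>i\<in>?A. x i * max_entry n x)"
      unfolding qd power2_eq_square using nn le_max
      by (intro sum_mono mult_left_mono) auto
    also have "\<dots> = max_entry n x" using s1 by (simp flip: sum_distrib_right)
    finally show ?thesis .
  qed
  have qpos: "q > 0"
  proof -
    have "x a > 0" using nn ab by (auto simp: order_le_less)
    then have "0 < (x a)^2" by simp
    also have "\<dots> \<le> q" unfolding qd using ab(1)
      by (intro member_le_sum) auto
    finally show ?thesis .
  qed
  have k1: "real k - 1 > 0" using assms(1) by simp
  have qk: "(real k - 1) * q < 1"
  proof -
    have "(real k - 1) * q < (real k - 1) * (1 / (real k - 1))"
      using qM assms(3) k1 by (intro mult_strict_left_mono) auto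
    then show ?thesis using k1 by simp
  qed
  have mq: "\<forall>m<k. real m * q < 1"
  proof (intro allI impI)
    fix m assume "m < k"
    then have "real m \<le> real k - 1" by linarith
    then have "real m * q \<le> (real k - 1) * q" using qpos by (intro mult_right_mono) auto
    then show "real m * q < 1" using qk by simp
  qed
  have key: "(\<Prod>t=0..<k. 1 - real t * q) < fact k * es x ?A k"
    using main_ineq[of ?A x q k a b k] nn s1 qd mq ab assms(1) by auto
  have "q ^ k * ((1 / q) gchoose k) = q ^ k * (\<Prod>i=0..<k. 1 / q - of_nat i) / fact k"
    by (simp add: gbinomial_prod_rev)
  also have "q ^ k * (\<Prod>i=0..<k. 1 / q - of_nat i) = (\<Prod>i=0..<k. q * (1 / q - of_nat i))"
    by (simp add: prod.distrib)
  also have "\<dots> = (\<Prod>t=0..<k. 1 - real t * q)"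
    using qpos by (intro prod.cong refl) (simp add: field_simps)
  finally have "q ^ k * ((1 / q) gchoose k) = (\<Prod>t=0..<k. 1 - real t * q) / fact k" .
  also have "\<dots> < es x ?A k" using key by (simp add: divide_less_eq algebra_simps)
  finally show ?thesis by (simp add: q_def elem_sym_def es_def)
qed

end
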